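(* Let $p\equiv 3\pmod 4$ be a prime and $t\in\mathbb{F}_p$. The equation $y^2=x^3-(t^2+1)x$ over $\mathbb{F}_p$ defines a supersingular elliptic curve $E_t/\mathbb{F}_p$, and the point $(-1,t)$ is not divisible by $2$ in $E_t(\mathbb{F}_p)$, i.e. there is no $Q\in E_t(\mathbb{F}_p)$ with $2Q=(-1,t)$. *)

theory Defs
  imports "Berlekamp_Zassenhaus.Finite_Field"
begin

text \<open>Points of a short Weierstrass curve y^2 = x^3 + a x + b over a field
  (characteristic different from 2), in affine coordinates plus the point at infinity.\<close>

datatype 'a ec_point = Inf | Pt 'a 'a

definition on_curve :: "'a::field \<Rightarrow> 'a \<Rightarrow> 'a ec_point \<Rightarrow> bool" where
  "on_curve a b P = (case P of Inf \<Rightarrow> True | Pt x y \<Rightarrow> y^2 = x^3 + a*x + b)"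

definition elliptic_curve :: "'a::field \<Rightarrow> 'a \<Rightarrow> bool" where
  "elliptic_curve a b = (4*a^3 + 27*b^2 \<noteq> 0)"

text \<open>The chord-tangent group law (valid in characteristic not 2).\<close>
fun ec_add :: "'a::field \<Rightarrow> 'a ec_point \<Rightarrow> 'a ec_point \<Rightarrow> 'a ec_point" where
  "ec_add a Inf Q = Q"
| "ec_add a (Pt x1 y1) Inf = Pt x1 y1"
| "ec_add a (Pt x1 y1) (Pt x2 y2) =
     (if x1 = x2 then
        (if y1 = - y2 then Inf
         else (let l = (3 * x1^2 + a) / (2 * y1); x3 = l^2 - 2 * x1
               in Pt x3 (l * (x1 - x3) - y1)))
      else (let l = (y2 - y1) / (x2 - x1); x3 = l^2 - x1 - x2
            in Pt x3 (l * (x1 - x3) - y1)))"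

text \<open>Supersingularity of an elliptic curve over the prime field F_p: the trace of
  Frobenius p + 1 - #E(F_p) is divisible by p, i.e. #E(F_p) = 1 (mod p).\<close>
definition supersingular :: "'p::{finite,prime_card} mod_ring \<Rightarrow> 'p mod_ring \<Rightarrow> bool" where
  "supersingular a b = (card {P. on_curve a b P} mod CARD('p) = 1)"

end

theory Submission
  imports Defs "Berlekamp_Zassenhaus.Berlekamp_Type_Based"
begin

lemma two_ne_zero_mr:
  assumes "CARD('p::prime_card) mod 4 = 3"
  shows "(2::'p mod_ring) \<noteq> 0"
proof
  assume "(2::'p mod_ring) = 0"
  hence "(of_nat 2::'p mod_ring) = 0" by simp
  hence "CARD('p) dvd 2" by (rule of_nat_0_mod_ring_dvd)
  hence "CARD('p) \<le> 2" by (simp add: dvd_imp_le)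
  hence "CARD('p) mod 4 = CARD('p)" by simp
  with assms \<open>CARD('p) \<le> 2\<close> show False by simp
qed

lemma nonsq_minus_one:
  assumes "CARD('p::prime_card) mod 4 = 3"
  shows "(z::'p mod_ring)^2 \<noteq> -1"
proof
  assume z: "z^2 = -1"
  obtain k where k: "CARD('p) = 4*k+3" using assms by (metis mod_div_mult_eq add.commute mult.commute)
  have z4: "z^4 = 1" using z by (metis power_mult numeral_Bit0 mult_2 power_add neg_one_even_power even_numeral power2_eq_square mult_minus1 minus_minus)
  have fe: "z ^ CARD('p) = z" by (rule fermat_theorem_mod_ring)
  have pw: "z ^ CARD('p) = (z^4)^k * (z^2 * z)" unfolding k power_add power_mult
    by (simp add: power2_eq_square power3_eq_cube)
  have "z = (z^4)^k * (z^2 * z)" using fe[symmetric] pw by (rule trans)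
  also have "\<dots> = -z" unfolding z z4 by simp
  finally have zz: "z = -z" .
  have "2*z = z + z" by (rule mult_2)
  also have "\<dots> = z + (-z)" by (rule arg_cong[where f="\<lambda>w. z + w"]) (rule zz)
  also have "\<dots> = 0" by (rule add.right_inverse)
  finally have "2*z = 0" .
  hence "z = 0" using two_ne_zero_mr[OF assms] by simp
  with z show False by simp
qed


definition hc :: "'a::field \<Rightarrow> nat" where
  "hc c = card {y::'a. y^2 = c}"

lemma sq_eq_iff: "(y::'a::field)^2 = s^2 \<longleftrightarrow> y = s \<or> y = -s"
  by (metis power2_eq_iff)

lemma hc_le2: "hc (c::'a::{field,finite}) \<le> 2"
proof (cases "\<exists>s. s^2 = c")
  case True
  then obtain s where s: "s^2 = c" by blast
  have "{y::'a. y^2 = c} \<subseteq> {s, -s}" using s sq_eq_iff by auto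
  hence "card {y::'a. y^2 = c} \<le> card {s, -s}" by (intro card_mono) auto
  also have "\<dots> \<le> 2" by (simp add: card_insert_if)
  finally show ?thesis unfolding hc_def .
next
  case False
  hence "{y::'a. y^2 = c} = {}" by auto
  thus ?thesis unfolding hc_def by simp
qed

lemma hc0: "hc (0::'a::field) = 1"
proof -
  have "{y::'a. y^2 = 0} = {0}" by auto
  thus ?thesis unfolding hc_def by simp
qed

lemma hc_neg:
  assumes "CARD('p::prime_card) mod 4 = 3" and "(c::'p mod_ring) \<noteq> 0"
  shows "hc c = 0 \<or> hc (-c) = 0"
proof (rule ccontr)
  assume "\<not> ?thesis"
  hence "{y. y^2 = c} \<noteq> {}" "{y. y^2 = -c} \<noteq> {}" unfolding hc_def by auto
  then obtain y z where y: "y^2 = c" and z: "z^2 = -c" by auto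
  have "y \<noteq> 0" using y assms(2) by auto
  hence "(z/y)^2 = -1" using y z assms(2) by (simp add: power_divide)
  with nonsq_minus_one[OF assms(1)] show False by blast
qed

lemma hc_sum: "(\<Sum>c\<in>UNIV. hc (c::'a::{field,finite})) = CARD('a)"
proof -
  have "UNIV = (\<Union>c. {y::'a. y^2 = c})" by auto
  hence "CARD('a) = card (\<Union>c. {y::'a. y^2 = c})" by simp
  also have "\<dots> = (\<Sum>c\<in>UNIV. card {y::'a. y^2 = c})"
    by (rule card_UN_disjoint) auto
  finally show ?thesis unfolding hc_def by simp
qed

lemma sum_neg_reindex: "(\<Sum>c\<in>UNIV. g (- (c::'a::{ab_group_add,finite}))) = (\<Sum>c\<in>UNIV. g c)"
  by (rule sum.reindex_bij_witness[where i=uminus and j=uminus]) auto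

lemma hc_pair:
  assumes "CARD('p::prime_card) mod 4 = 3"
  shows "hc (c::'p mod_ring) + hc (-c) = 2"
proof -
  have le: "hc (c::'p mod_ring) + hc (-c) \<le> 2" for c
  proof (cases "c = 0")
    case True thus ?thesis by (simp add: hc0)
  next
    case False
    thus ?thesis using hc_neg[OF assms False] hc_le2[of c] hc_le2[of "-c"] by auto
  qed
  have "(\<Sum>c\<in>UNIV. hc (c::'p mod_ring) + hc (-c)) = 2 * CARD('p)"
    by (simp add: sum.distrib sum_neg_reindex[where g=hc] hc_sum)
  hence "(\<Sum>c\<in>UNIV. 2 - (hc (c::'p mod_ring) + hc (-c))) = 0"
    using le by (simp add: sum_subtractf_nat)
  hence "2 - (hc c + hc (-c)) = 0" by simp
  with le[of c] show ?thesis by linarith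
qed

lemma hc_curve_sum:
  assumes "CARD('p::prime_card) mod 4 = 3"
  shows "(\<Sum>x\<in>UNIV. hc ((x::'p mod_ring)^3 + a*x)) = CARD('p)"
proof -
  let ?g = "\<lambda>x::'p mod_ring. hc (x^3 + a*x)"
  have pair: "?g x + ?g (-x) = 2" for x
  proof -
    have "?g (-x) = hc (- (x^3 + a*x))" by (simp add: power3_eq_cube)
    thus ?thesis using hc_pair[OF assms, of "x^3 + a*x"] by simp
  qed
  have "(\<Sum>x\<in>UNIV. ?g x + ?g (-x)) = (\<Sum>x::'p mod_ring\<in>UNIV. 2)"
    by (simp only: pair)
  hence "(\<Sum>x\<in>UNIV. ?g x) + (\<Sum>x\<in>UNIV. ?g (-x)) = 2 * CARD('p)"
    by (simp add: sum.distrib)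
  moreover have "(\<Sum>x\<in>UNIV. ?g (-x)) = (\<Sum>x\<in>UNIV. ?g x)" by (rule sum_neg_reindex)
  ultimately show ?thesis by simp
qed

lemma card_points:
  assumes "CARD('p::prime_card) mod 4 = 3"
  shows "card {P. on_curve (a::'p mod_ring) 0 P} = CARD('p) + 1"
proof -
  have eq: "{P. on_curve a 0 P} = insert Inf (\<Union>x. Pt x ` {y. y^2 = x^3 + a*x})"
  proof (rule Set.set_eqI)
    fix P show "P \<in> {P. on_curve a 0 P} \<longleftrightarrow> P \<in> insert Inf (\<Union>x. Pt x ` {y. y^2 = x^3 + a*x})"
      by (cases P) (auto simp: on_curve_def)
  qed
  have "card (\<Union>x. Pt x ` {y::'p mod_ring. y^2 = x^3 + a*x}) = (\<Sum>x\<in>UNIV. card (Pt x ` {y::'p mod_ring. y^2 = x^3 + a*x}))"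
    by (rule card_UN_disjoint) auto
  also have "\<dots> = (\<Sum>x\<in>UNIV. hc (x^3 + a*x))"
    unfolding hc_def by (intro sum.cong refl card_image) (auto simp: inj_on_def)
  also have "\<dots> = CARD('p)" by (rule hc_curve_sum[OF assms])
  finally show ?thesis unfolding eq by (subst card_insert_disjoint) auto
qed

lemma double_x:
  fixes x y a :: "'a::field"
  assumes "y^2 = x^3 + a*x" "y \<noteq> 0" "(2::'a) \<noteq> 0"
  shows "((3 * x^2 + a) / (2 * y))^2 - 2 * x = ((x^2 - a) / (2*y))^2"
proof -
  have f: "(4::'a) = 2*2" by simp
  have "(2::'a)*2*y^2 \<noteq> 0" by (intro no_zero_divisors power_not_zero assms(2,3))
  hence d: "4*y^2 \<noteq> 0" using f by metis
  have e1: "((3 * x^2 + a) / (2 * y))^2 = (3 * x^2 + a)^2 / (4*y^2)"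
    by (simp add: power_divide power_mult_distrib)
  have e2: "2*x = (8*x*y^2)/(4*y^2)" using d by (simp add: field_simps)
  have "((3 * x^2 + a) / (2 * y))^2 - 2 * x = ((3 * x^2 + a)^2 - 8 * x * y^2) / (4 * y^2)"
    unfolding e1 by (subst e2) (simp add: diff_divide_distrib)
  also have num: "(3 * x^2 + a)^2 - 8 * x * y^2 = (x^2 - a)^2"
  proof -
    have "(3 * x^2 + a)^2 - 8 * x * y^2 = (3 * x^2 + a)^2 - 8 * x * (x^3 + a*x)"
      using assms(1) by simp
    also have "\<dots> = (x^2 - a)^2"
      by (simp add: algebra_simps power2_eq_square power3_eq_cube)
    finally show ?thesis .
  qed
  also have "((x^2 - a)^2) / (4 * y^2) = ((x^2 - a) / (2*y))^2" by (simp add: power_divide power_mult_distrib)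
  finally show ?thesis .
qed

theorem proposition1:
  fixes t :: "'p::{finite,prime_card} mod_ring"
  assumes "CARD('p) mod 4 = 3"
  shows "elliptic_curve (- (t^2 + 1)) 0
       \<and> supersingular (- (t^2 + 1)) 0
       \<and> on_curve (- (t^2 + 1)) 0 (Pt (-1) t)
       \<and> \<not> (\<exists>Q. on_curve (- (t^2 + 1)) 0 Q \<and> ec_add (- (t^2 + 1)) Q Q = Pt (-1) t)"
proof -
  have two: "(2::'p mod_ring) \<noteq> 0" by (rule two_ne_zero_mr[OF assms])
  have ns: "\<And>z::'p mod_ring. z^2 \<noteq> -1" by (rule nonsq_minus_one[OF assms])
  have "t^2 + 1 \<noteq> 0"
  proof
    assume "t^2 + 1 = 0"
    hence "t^2 = -1" by (simp add: eq_neg_iff_add_eq_0)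
    with ns show False by blast
  qed
  moreover have "(4::'p mod_ring) \<noteq> 0"
  proof -
    have f: "(4::'p mod_ring) = 2*2" by simp
    have "(2::'p mod_ring)*2 \<noteq> 0" by (intro no_zero_divisors two)
    thus ?thesis using f by metis
  qed
  moreover have "- (t^2) \<noteq> 1"
  proof
    assume "- (t^2) = 1"
    hence "t^2 = -1" by (metis minus_minus)
    with ns show False by blast
  qed
  ultimately have c1: "elliptic_curve (- (t^2 + 1)) 0" unfolding elliptic_curve_def by simp
  have "CARD('p) \<ge> 2" using prime_card prime_ge_2_nat by blast
  hence "(CARD('p) + 1) mod CARD('p) = 1" by (simp add: mod_Suc)
  hence c2: "supersingular (- (t^2 + 1)) 0" unfolding supersingular_def card_points[OF assms] by simp
  have c3: "on_curve (- (t^2 + 1)) 0 (Pt (-1) t)" unfolding on_curve_def by simp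
  have c4: "\<not> (\<exists>Q. on_curve (- (t^2 + 1)) 0 Q \<and> ec_add (- (t^2 + 1)) Q Q = Pt (-1) t)"
  proof
    assume "\<exists>Q. on_curve (- (t^2 + 1)) 0 Q \<and> ec_add (- (t^2 + 1)) Q Q = Pt (-1) t"
    then obtain Q where Q: "on_curve (- (t^2 + 1)) 0 Q" "ec_add (- (t^2 + 1)) Q Q = Pt (-1) t" by blast
    have "Q \<noteq> Inf"
    proof
      assume "Q = Inf"
      hence "ec_add (- (t^2 + 1)) Q Q = Inf" by (simp only: ec_add.simps)
      with Q(2) show False by (metis ec_point.distinct(1))
    qed
    then obtain x y where Qxy: "Q = Pt x y" by (cases Q) blast+
    have "y^2 = x^3 + (- (t^2 + 1))*x + 0" using Q(1) unfolding Qxy on_curve_def ec_point.case .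
    hence yc: "y^2 = x^3 + (- (t^2 + 1))*x" unfolding add_0_right .
    have yy: "y \<noteq> -y"
    proof
      assume "y = -y"
      have "ec_add (- (t^2 + 1)) Q Q = Inf" unfolding Qxy
        unfolding ec_add.simps(3) if_P[OF refl] if_P[OF \<open>y = -y\<close>] by (rule refl)
      with Q(2) show False by (metis ec_point.distinct(1))
    qed
    have y0: "y \<noteq> 0"
    proof
      assume "y = 0"
      have "y = -y" by (metis \<open>y = 0\<close> minus_zero)
      with yy show False by (rule notE)
    qed
    let ?l = "(3 * x^2 + (- (t^2 + 1))) / (2 * y)"
    have e: "ec_add (- (t^2 + 1)) Q Q = Pt (?l^2 - 2 * x) (?l * (x - (?l^2 - 2 * x)) - y)"
      unfolding Qxy ec_add.simps(3) if_P[OF refl] if_not_P[OF yy] Let_def by (rule refl)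
    have pe: "Pt (?l^2 - 2 * x) (?l * (x - (?l^2 - 2 * x)) - y) = Pt (-1) t"
      using e[symmetric] Q(2) by (rule trans)
    have h: "?l^2 - 2 * x = -1" using pe by (rule ec_point.inject[THEN iffD1, THEN conjunct1])
    have fin: "((x^2 - (- (t^2 + 1))) / (2*y))^2 = -1"
      by (rule trans[OF sym[OF double_x[OF yc y0 two]] h])
    show False using ns[of "(x^2 - (- (t^2 + 1))) / (2*y)"] fin by (rule notE)
  qed
  show ?thesis using c1 c2 c3 c4 by blast
qed

end
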